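(* Let $(G,S,\tau,\mu,c,\gamma)$ be a generalized network flow instance and $x\in\mathbb{R}_{\ge0}^E$ with $x_e\in[0,\mu_e]$ for every $e\in E$, and let $v\in V\setminus\{\tau\}$. Then the minimum cost of a fractional augmenting path from $v$ in $G^x$, assuming one exists, is attained by an augmenting path.
   Context: A generalized network flow instance: digraph $G=(V,E)$ without anti-parallel edges, sources $S\subseteq V$ with no incoming edges, sink $\tau\in V\setminus S$ with no outgoing edges, and for each edge $e$ a capacity $\mu_e>0$, cost $c_e>0$ and gain $\gamma_e>0$. Residual graph $G^x=(V,E^x)$ with parameters $\mu^x,c^x,\gamma^x$: for every $uv\in E$ with $x_{uv}<\mu_{uv}$ there is a forward edge $uv$ with $\mu^x_{uv}=\mu_{uv}-x_{uv}$, $c^x_{uv}=c_{uv}$, $\gamma^x_{uv}=\gamma_{uv}$; for every $uv\in E$ with $x_{uv}>0$ there is a backward edge $vu$ with $\mu^x_{vu}=\gamma_{uv}x_{uv}$, $c^x_{vu}=0$, $\gamma^x_{vu}=1/\gamma_{uv}$. A fractional augmenting path from $s\in V\setminus\{\tau\}$ in $G^x$ is a vector $f\in\mathbb{R}_{\ge0}^{E^x}$ (capacities are ignored) such that $\sum_{e\in\delta^+_{G^x}(w)}f_e-\sum_{e\in\delta^-_{G^x}(w)}\gamma^x_ef_e$ equals $1$ for $w=s$ and $0$ for $w\in V\setminus\{s,\tau\}$; its cost is $\sum_{e\in E^x}c^x_ef_e$. It is an augmenting path if moreover its support is (a) a path from $s$ to $\tau$ in $G^x$, or (b) a cycle in $G^x$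 containing $s$ but not $\tau$, or (c) the union of a cycle $C$ in $G^x$ containing neither $s$ nor $\tau$ and a path in $G^x$ from $s$ to $C$ internally disjoint from $C$. *)

theory Defs
  imports Complex_Main
begin

type_synonym 'v edge = "'v \<times> 'v"

definition gnf_instance ::
  "'v set \<Rightarrow> 'v edge set \<Rightarrow> 'v set \<Rightarrow> 'v \<Rightarrow> ('v edge \<Rightarrow> real) \<Rightarrow> ('v edge \<Rightarrow> real)
   \<Rightarrow> ('v edge \<Rightarrow> real) \<Rightarrow> bool" where
  "gnf_instance V E S \<tau> \<mu> c \<gamma> \<longleftrightarrow>
     finite V \<and> E \<subseteq> V \<times> V \<and>
     (\<forall>u w. (u, w) \<in> E \<longrightarrow> (w, u) \<notin> E) \<and>
     S \<subseteq> V \<and> (\<forall>e\<in>E. snd e \<notin> S) \<and>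
     \<tau> \<in> V \<and> \<tau> \<notin> S \<and> (\<forall>e\<in>E. fst e \<noteq> \<tau>) \<and>
     (\<forall>e\<in>E. \<mu> e > 0 \<and> c e > 0 \<and> \<gamma> e > 0)"

text \<open>Residual graph G^x. Since G has no anti-parallel edges, every residual edge
  is determined by its endpoints: it is forward iff it lies in E.\<close>
definition res_edges :: "'v edge set \<Rightarrow> ('v edge \<Rightarrow> real) \<Rightarrow> ('v edge \<Rightarrow> real) \<Rightarrow> 'v edge set" where
  "res_edges E \<mu> x =
     {(u, w). (u, w) \<in> E \<and> x (u, w) < \<mu> (u, w)} \<union> {(w, u). (u, w) \<in> E \<and> x (u, w) > 0}"

definition res_cap :: "'v edge set \<Rightarrow> ('v edge \<Rightarrow> real) \<Rightarrow> ('v edge \<Rightarrow> real) \<Rightarrow> ('v edge \<Rightarrow> real) \<Rightarrow> 'v edge \<Rightarrow> real" where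
  "res_cap E \<mu> \<gamma> x e = (if e \<in> E then \<mu> e - x e else \<gamma> (snd e, fst e) * x (snd e, fst e))"

definition res_cost :: "'v edge set \<Rightarrow> ('v edge \<Rightarrow> real) \<Rightarrow> 'v edge \<Rightarrow> real" where
  "res_cost E c e = (if e \<in> E then c e else 0)"

definition res_gain :: "'v edge set \<Rightarrow> ('v edge \<Rightarrow> real) \<Rightarrow> 'v edge \<Rightarrow> real" where
  "res_gain E \<gamma> e = (if e \<in> E then \<gamma> e else 1 / \<gamma> (snd e, fst e))"

definition frac_aug_path ::
  "'v set \<Rightarrow> 'v edge set \<Rightarrow> ('v edge \<Rightarrow> real) \<Rightarrow> ('v edge \<Rightarrow> real) \<Rightarrow> ('v edge \<Rightarrow> real)
   \<Rightarrow> 'v \<Rightarrow> 'v \<Rightarrow> ('v edge \<Rightarrow> real) \<Rightarrow> bool" where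
  "frac_aug_path V E \<mu> \<gamma> x \<tau> s f \<longleftrightarrow>
     (\<forall>e. e \<notin> res_edges E \<mu> x \<longrightarrow> f e = 0) \<and>
     (\<forall>e\<in>res_edges E \<mu> x. f e \<ge> 0) \<and>
     (\<forall>w\<in>V - {\<tau>}.
        (\<Sum>e\<in>{e\<in>res_edges E \<mu> x. fst e = w}. f e)
        - (\<Sum>e\<in>{e\<in>res_edges E \<mu> x. snd e = w}. res_gain E \<gamma> e * f e)
        = (if w = s then 1 else 0))"

definition flow_cost :: "'v edge set \<Rightarrow> ('v edge \<Rightarrow> real) \<Rightarrow> ('v edge \<Rightarrow> real) \<Rightarrow> ('v edge \<Rightarrow> real)
   \<Rightarrow> ('v edge \<Rightarrow> real) \<Rightarrow> real" where
  "flow_cost E \<mu> c x f = (\<Sum>e\<in>res_edges E \<mu> x. res_cost E c e * f e)"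

definition supp :: "'v edge set \<Rightarrow> ('v edge \<Rightarrow> real) \<Rightarrow> 'v edge set" where
  "supp A f = {e\<in>A. f e \<noteq> 0}"

definition path_edges :: "'v list \<Rightarrow> 'v edge set" where
  "path_edges p = set (zip p (tl p))"

definition is_path :: "'v edge set \<Rightarrow> 'v list \<Rightarrow> 'v \<Rightarrow> 'v \<Rightarrow> bool" where
  "is_path A p a b \<longleftrightarrow> distinct p \<and> length p \<ge> 2 \<and> hd p = a \<and> last p = b \<and> path_edges p \<subseteq> A"

definition cycle_edges :: "'v list \<Rightarrow> 'v edge set" where
  "cycle_edges C = set (zip C (tl C @ [hd C]))"

definition is_cycle :: "'v edge set \<Rightarrow> 'v list \<Rightarrow> bool" where
  "is_cycle A C \<longleftrightarrow> distinct C \<and> length C \<ge> 2 \<and> cycle_edges C \<subseteq> A"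

definition aug_path ::
  "'v set \<Rightarrow> 'v edge set \<Rightarrow> ('v edge \<Rightarrow> real) \<Rightarrow> ('v edge \<Rightarrow> real) \<Rightarrow> ('v edge \<Rightarrow> real)
   \<Rightarrow> 'v \<Rightarrow> 'v \<Rightarrow> ('v edge \<Rightarrow> real) \<Rightarrow> bool" where
  "aug_path V E \<mu> \<gamma> x \<tau> s f \<longleftrightarrow>
     frac_aug_path V E \<mu> \<gamma> x \<tau> s f \<and>
     (let A = res_edges E \<mu> x; F = supp A f in
       (\<exists>p. is_path A p s \<tau> \<and> F = path_edges p) \<or>
       (\<exists>C. is_cycle A C \<and> s \<in> set C \<and> \<tau> \<notin> set C \<and> F = cycle_edges C) \<or>
       (\<exists>C p. is_cycle A C \<and> s \<notin> set C \<and> \<tau> \<notin> set C \<and>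
          is_path A p s (last p) \<and> last p \<in> set C \<and> set p \<inter> set C = {last p} \<and>
          F = path_edges p \<union> cycle_edges C))"

end

theory Submission
  imports Defs
begin


lemma path_edges_nth: "path_edges p = {(p!i, p!(Suc i)) | i. i < length p - 1}"
  unfolding path_edges_def set_zip by (auto simp: nth_tl)

lemma path_edges_map: "j \<le> m \<Longrightarrow> path_edges (map w [j..<Suc m]) = (\<lambda>i. (w i, w (Suc i))) ` {j..<m}"
proof -
  assume "j \<le> m"
  have "{(map w [j..<Suc m] ! i, map w [j..<Suc m] ! Suc i) |i. i < length (map w [j..<Suc m]) - 1}
     = {(w (j+i), w (j + Suc i)) | i. i < m - j}"
    using \<open>j \<le> m\<close> apply (auto simp del: upt_Suc simp: nth_map_upt)
    by (metis Suc_diff_le add_Suc_right diff_Suc_Suc less_SucI nth_map_upt Suc_less_eq)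
  also have "\<dots> = (\<lambda>i. (w i, w (Suc i))) ` {j..<m}"
    apply auto apply (rule_tac x="i - j" in exI) apply auto done
  finally show ?thesis unfolding path_edges_nth .
qed

lemma cycle_edges_map:
  assumes "j < k" "w k = w j"
  shows "cycle_edges (map w [j..<k]) = (\<lambda>i. (w i, w (Suc i))) ` {j..<k}"
proof -
  let ?C = "map w [j..<k]"
  have n: "(tl ?C @ [hd ?C]) ! i = w (j + Suc i)" if "i < k - j" for i
  proof (cases "i < k - j - 1")
    case True then show ?thesis using that by (simp add: nth_append nth_tl)
  next
    case False then have "i = k - j - 1" using that by auto
    then show ?thesis using assms by (simp add: nth_append hd_map)
  qed
  have "cycle_edges ?C = {(?C!i, (tl ?C @ [hd ?C])!i) | i. i < k - j}"
    unfolding cycle_edges_def set_zip using assms by auto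
  also have "\<dots> = {(w (j+i), w (j + Suc i)) | i. i < k - j}"
    using n by force
  also have "\<dots> = (\<lambda>i. (w i, w (Suc i))) ` {j..<k}"
    apply auto apply (rule_tac x="i - j" in exI) apply auto done
  finally show ?thesis .
qed


locale gnf =
  fixes V :: "'v set" and E :: "'v edge set" and S :: "'v set" and \<tau> :: 'v
    and \<mu> c \<gamma> x :: "'v edge \<Rightarrow> real"
  assumes inst: "gnf_instance V E S \<tau> \<mu> c \<gamma>"
begin

abbreviation "A \<equiv> res_edges E \<mu> x"
definition gn where "gn e = res_gain E \<gamma> e"
definition cons where
  "cons h w = (\<Sum>e\<in>{e\<in>A. fst e = w}. h e) - (\<Sum>e\<in>{e\<in>A. snd e = w}. gn e * h e)"
definition homog where "homog h \<longleftrightarrow> (\<forall>w\<in>V-{\<tau>}. cons h w = 0)"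
definition indep where
  "indep F \<longleftrightarrow> (\<forall>h. homog h \<longrightarrow> (\<forall>e. e \<notin> F \<longrightarrow> h e = 0) \<longrightarrow> (\<forall>e. h e = 0))"
abbreviation "feas s f \<equiv> frac_aug_path V E \<mu> \<gamma> x \<tau> s f"
abbreviation "cost f \<equiv> flow_cost E \<mu> c x f"

lemma A_sub: "A \<subseteq> V \<times> V"
  using inst unfolding gnf_instance_def res_edges_def by auto

lemma finA: "finite A"
  using A_sub inst finite_subset unfolding gnf_instance_def by (metis finite_SigmaI)

lemma no_loop: "(u,u) \<notin> A"
  using inst unfolding gnf_instance_def res_edges_def by auto

lemma gn_pos: "e \<in> A \<Longrightarrow> gn e > 0"
  using inst unfolding gnf_instance_def res_edges_def gn_def res_gain_def by (cases e) auto

lemma rc_nonneg: "e \<in> A \<Longrightarrow> res_cost E c e \<ge> 0"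
  using inst unfolding gnf_instance_def res_cost_def by (cases e) (auto simp: less_imp_le)

lemma feas_iff: "feas s f \<longleftrightarrow> (\<forall>e. e\<notin>A \<longrightarrow> f e = 0) \<and> (\<forall>e\<in>A. f e \<ge> 0) \<and>
   (\<forall>w\<in>V-{\<tau>}. cons f w = (if w = s then 1 else 0))"
  unfolding frac_aug_path_def cons_def gn_def by simp

lemma cost_eq: "cost f = (\<Sum>e\<in>A. res_cost E c e * f e)"
  unfolding flow_cost_def by simp

lemma cons_lin: "cons (\<lambda>e. f e + t * h e) w = cons f w + t * cons h w"
  unfolding cons_def by (simp add: sum.distrib sum_distrib_left algebra_simps)

lemma cons_diff: "cons (\<lambda>e. f e - h e) w = cons f w - cons h w"
  unfolding cons_def by (simp add: sum_subtractf algebra_simps)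

lemma cons_neg: "cons (\<lambda>e. - h e) w = - cons h w"
  unfolding cons_def by (simp add: sum_negf algebra_simps)

lemma cost_lin: "cost (\<lambda>e. f e + t * h e) = cost f + t * cost h"
  unfolding cost_eq by (simp add: sum.distrib sum_distrib_left algebra_simps)

lemma cost_neg_ex: "cost k < 0 \<Longrightarrow> \<exists>e. k e < 0"
proof (rule ccontr)
  assume "cost k < 0" "\<not> (\<exists>e. k e < 0)"
  then have "cost k \<ge> 0" unfolding cost_eq
    by (intro sum_nonneg) (metis rc_nonneg mult_nonneg_nonneg not_less)
  then show False using \<open>cost k < 0\<close> by simp
qed

lemma cost_nonneg: "\<forall>e. k e \<ge> 0 \<Longrightarrow> cost k \<ge> 0"
  unfolding cost_eq by (intro sum_nonneg) (metis rc_nonneg mult_nonneg_nonneg)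

lemma reduce:
  assumes "feas s g"
  shows "\<exists>f. feas s f \<and> indep (supp A f) \<and> cost f \<le> cost g"
  using assms
proof (induction "card (supp A g)" arbitrary: g rule: less_induct)
  case less
  show ?case
  proof (cases "indep (supp A g)")
    case True then show ?thesis using less.prems by auto
  next
    case False
    then obtain h where hh: "homog h" "\<forall>e. e \<notin> supp A g \<longrightarrow> h e = 0" "\<exists>e. h e \<noteq> 0"
      unfolding indep_def by auto
    obtain h' where h': "homog h'" "\<forall>e. e \<notin> supp A g \<longrightarrow> h' e = 0" "cost h' \<le> 0" "\<exists>e. h' e < 0"
    proof (cases "cost h \<le> 0 \<and> (\<exists>e. h e < 0)")
      case True then show ?thesis using hh that by blast
    next
      case False
      have cn: "cost (\<lambda>e. - h e) = - cost h"
        using cost_lin[of "\<lambda>e. 0" "-1" h] by (simp add: cost_eq)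
      have "\<exists>e. - h e < 0"
      proof (cases "cost h > 0")
        case True then show ?thesis using cost_neg_ex[of "\<lambda>e. - h e"] cn by simp
      next
        case False2: False
        then have "\<forall>e. h e \<ge> 0" using False by (meson not_less)
        then show ?thesis using hh(3) by (metis le_less neg_less_0_iff_less)
      qed
      moreover have "cost (\<lambda>e. - h e) \<le> 0"
      proof (cases "cost h > 0")
        case True then show ?thesis using cn by simp
      next
        case False2: False
        then have "\<forall>e. h e \<ge> 0" using False by (meson not_less)
        then show ?thesis using cn cost_nonneg by simp
      qed
      moreover have "homog (\<lambda>e. - h e)" using hh(1) unfolding homog_def by (simp add: cons_neg)
      ultimately show ?thesis using that[of "\<lambda>e. - h e"] hh(2) by simp
    qed
    have suppA: "supp A g \<subseteq> A" unfolding supp_def by auto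
    have fins: "finite (supp A g)" using finA suppA finite_subset by blast
    have gpos: "e \<in> supp A g \<Longrightarrow> g e > 0" for e
      using less.prems unfolding feas_iff supp_def by force
    define N where "N = {e \<in> supp A g. h' e < 0}"
    have finN: "finite N" using fins unfolding N_def by auto
    have NN: "N \<noteq> {}" using h'(2,4) unfolding N_def by force
    define r where "r e = g e / (- h' e)" for e
    define t where "t = Min (r ` N)"
    have "t \<in> r ` N" using Min_in[of "r ` N"] finN NN unfolding t_def by blast
    then obtain e0 where e0: "e0 \<in> N" "r e0 = t" by blast
    have tle: "e \<in> N \<Longrightarrow> t \<le> r e" for e unfolding t_def using finN by auto
    have "g e0 > 0" "h' e0 < 0" using e0 gpos unfolding N_def by auto
    then have "g e0 / (- h' e0) > 0" by (intro divide_pos_pos) auto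
    then have tpos: "t > 0" using e0 unfolding r_def by simp
    define g' where "g' e = g e + t * h' e" for e
    have "feas s g'"
      unfolding feas_iff
    proof (intro conjI ballI allI impI)
      fix e assume "e \<notin> A"
      then have "g e = 0" "h' e = 0" using less.prems h'(2) suppA unfolding feas_iff by blast+
      then show "g' e = 0" unfolding g'_def by simp
    next
      fix e assume eA: "e \<in> A"
      show "g' e \<ge> 0"
      proof (cases "h' e < 0")
        case True
        then have "e \<in> N" using h'(2) unfolding N_def by (metis (mono_tags, lifting) mem_Collect_eq less_irrefl)
        then have "t \<le> g e / (- h' e)" using tle r_def by auto
        then have "t * (- h' e) \<le> g e" using True by (metis neg_0_less_iff_less pos_le_divide_eq)
        then show ?thesis unfolding g'_def by simp
      next
        case False
        then show ?thesis using eA less.prems tpos unfolding feas_iff g'_def by auto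
      qed
    next
      fix w assume "w \<in> V - {\<tau>}"
      then show "cons g' w = (if w = s then 1 else 0)"
        using less.prems h'(1) unfolding feas_iff homog_def g'_def by (simp add: cons_lin)
    qed
    moreover have "cost g' \<le> cost g"
      unfolding g'_def cost_lin using tpos h'(3) by (simp add: mult_nonneg_nonpos)
    moreover have "card (supp A g') < card (supp A g)"
    proof -
      have "supp A g' \<subseteq> supp A g - {e0}"
      proof
        fix e assume e: "e \<in> supp A g'"
        have "e \<noteq> e0" using e e0 unfolding supp_def g'_def r_def N_def by auto
        moreover have "e \<in> supp A g"
        proof (rule ccontr)
          assume "e \<notin> supp A g"
          then have "h' e = 0" using h'(2) by blast
          moreover have "g e = 0" using \<open>e \<notin> supp A g\<close> e unfolding supp_def by simp
          ultimately show False using e unfolding supp_def g'_def by simp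
        qed
        ultimately show "e \<in> supp A g - {e0}" by auto
      qed
      moreover have "e0 \<in> supp A g" using e0 unfolding N_def by auto
      ultimately have "supp A g' \<subset> supp A g" by blast
      then show ?thesis using psubset_card_mono[OF fins] by blast
    qed
    ultimately obtain f where "feas s f" "indep (supp A f)" "cost f \<le> cost g'"
      using less.hyps[of g'] by blast
    then show ?thesis using \<open>cost g' \<le> cost g\<close> by (meson order_trans)
  qed
qed

lemma finK: "finite {f. feas s f \<and> indep (supp A f)}"
proof (rule finite_imageD)
  show "finite (supp A ` {f. feas s f \<and> indep (supp A f)})"
    by (rule finite_subset[of _ "Pow A"]) (auto simp: supp_def finA)
  show "inj_on (supp A) {f. feas s f \<and> indep (supp A f)}"
  proof (rule inj_onI)
    fix f1 f2 assume f1: "f1 \<in> {f. feas s f \<and> indep (supp A f)}" and f2: "f2 \<in> {f. feas s f \<and> indep (supp A f)}"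
      and eq: "supp A f1 = supp A f2"
    have "homog (\<lambda>e. f1 e - f2 e)"
      using f1 f2 unfolding homog_def feas_iff by (simp add: cons_diff)
    moreover have "\<forall>e. e \<notin> supp A f1 \<longrightarrow> f1 e - f2 e = 0"
    proof (intro allI impI)
      fix e assume "e \<notin> supp A f1"
      then have "e \<notin> supp A f2" using eq by simp
      have a1: "\<forall>e. e \<notin> A \<longrightarrow> f1 e = 0" "\<forall>e. e \<notin> A \<longrightarrow> f2 e = 0"
        using f1 f2 unfolding feas_iff mem_Collect_eq by blast+
      show "f1 e - f2 e = 0"
      proof (cases "e \<in> A")
        case True then show ?thesis using \<open>e \<notin> supp A f1\<close> \<open>e \<notin> supp A f2\<close> unfolding supp_def by simp
      next
        case False then have "f1 e = 0" "f2 e = 0" using a1 by blast+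
        then show ?thesis by simp
      qed
    qed
    ultimately have "\<forall>e. f1 e - f2 e = 0" using f1 unfolding indep_def by blast
    then show "f1 = f2" by auto
  qed
qed

end


lemma sum1: "inj_on w {..<(k::nat)} \<Longrightarrow> m < k \<Longrightarrow> (\<Sum>i<k. if w i = w m then a i else 0) = (a m :: real)"
proof -
  assume inj: "inj_on w {..<k}" and m: "m < k"
  have "(\<Sum>i<k. if w i = w m then a i else 0) = (\<Sum>i<k. if i = m then a i else 0)"
    using inj m by (intro sum.cong refl) (simp add: inj_on_eq_iff)
  also have "\<dots> = a m" using m by (simp add: sum.delta)
  finally show ?thesis .
qed

lemma sum1': "u \<notin> w ` {..<(k::nat)} \<Longrightarrow> (\<Sum>i<k. if w i = u then a i else 0) = (0::real)"
  by (intro sum.neutral) auto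

lemma sum2:
  assumes inj: "inj_on w {..<Suc n}" and m: "m < Suc n"
  shows "(\<Sum>i<Suc n. if w (Suc i) = w m then b i else 0) =
     (if m > 0 then b (m - 1) else 0) + (if w (Suc n) = w m then b n else (0::real))"
proof -
  have "(\<Sum>i<n. if w (Suc i) = w m then b i else 0) = (\<Sum>i<n. if i = m - 1 \<and> m > 0 then b i else 0)"
    using inj m by (intro sum.cong refl) (auto simp add: inj_on_eq_iff)
  also have "\<dots> = (if m > 0 then b (m - 1) else 0)"
    using m by (cases "m > 0") (auto simp: sum.delta)
  finally show ?thesis by simp
qed

lemma sum2':
  assumes "u \<notin> w ` {..<Suc n}"
  shows "(\<Sum>i<Suc n. if w (Suc i) = u then b i else 0) = (if w (Suc n) = u then b n else (0::real))"
proof -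
  have "(\<Sum>i<n. if w (Suc i) = u then b i else 0) = 0"
    using assms by (intro sum.neutral) auto
  then show ?thesis by simp
qed

context gnf begin

definition pm :: "(nat \<Rightarrow> 'v) \<Rightarrow> nat \<Rightarrow> (nat \<Rightarrow> real) \<Rightarrow> 'v edge \<Rightarrow> real" where
  "pm w k a e = (\<Sum>i<k. if e = (w i, w (Suc i)) then a i else 0)"

lemma cons_pm:
  assumes "\<forall>i<k. (w i, w (Suc i)) \<in> A"
  shows "cons (pm w k a) u = (\<Sum>i<k. if w i = u then a i else 0)
     - (\<Sum>i<k. if w (Suc i) = u then gn (w i, w (Suc i)) * a i else 0)"
proof -
  have 1: "(\<Sum>e\<in>{e\<in>A. fst e = u}. pm w k a e) = (\<Sum>i<k. if w i = u then a i else 0)"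
    unfolding pm_def
    apply (subst sum.swap)
    apply (rule sum.cong[OF refl])
    using assms finA by (auto simp: sum.delta)
  have 2: "(\<Sum>e\<in>{e\<in>A. snd e = u}. gn e * pm w k a e) =
       (\<Sum>i<k. if w (Suc i) = u then gn (w i, w (Suc i)) * a i else 0)"
    unfolding pm_def sum_distrib_left
    apply (subst sum.swap)
    apply (rule sum.cong[OF refl])
    using assms finA by (auto simp: if_distrib sum.delta cong: if_cong)
  show ?thesis unfolding cons_def 1 2 ..
qed

lemma pm_val: "inj_on w {..<k} \<Longrightarrow> m < k \<Longrightarrow> pm w k a (w m, w (Suc m)) = a m"
proof -
  assume inj: "inj_on w {..<k}" and m: "m < k"
  have "pm w k a (w m, w (Suc m)) = (\<Sum>i<k. if i = m then a i else 0)"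
    unfolding pm_def using inj m by (intro sum.cong refl) (auto simp add: inj_on_eq_iff)
  also have "\<dots> = a m" using m by (simp add: sum.delta)
  finally show ?thesis .
qed

lemma pm_zero: "e \<notin> (\<lambda>i. (w i, w (Suc i))) ` {..<k} \<Longrightarrow> pm w k a e = 0"
  unfolding pm_def by (intro sum.neutral) auto

end


context gnf begin

lemma out_edge:
  assumes f: "feas s f" and u: "u \<in> V - {\<tau>}" and h: "u = s \<or> (\<exists>z. (z,u) \<in> supp A f)"
  shows "\<exists>u'. (u,u') \<in> supp A f"
proof -
  have c: "cons f u = (if u = s then 1 else 0)" using f u unfolding feas_iff by blast
  have nn: "\<forall>e\<in>A. f e \<ge> 0" using f unfolding feas_iff by blast
  let ?I = "(\<Sum>e\<in>{e\<in>A. snd e = u}. gn e * f e)"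
  let ?O = "(\<Sum>e\<in>{e\<in>A. fst e = u}. f e)"
  have I0: "?I \<ge> 0" using nn gn_pos by (intro sum_nonneg) (simp add: less_imp_le)
  have finI: "finite {e\<in>A. snd e = u}" using finA by auto
  have "?O > 0"
  proof (cases "u = s")
    case True then have "?O = 1 + ?I" using c unfolding cons_def by simp
    then show ?thesis using I0 by simp
  next
    case False then obtain z where z: "(z,u) \<in> supp A f" using h by auto
    then have zA: "(z,u) \<in> A" and "f (z,u) \<noteq> 0" unfolding supp_def by auto
    then have "f (z,u) > 0" using nn by (simp add: order_less_le)
    then have "gn (z,u) * f (z,u) > 0" using gn_pos[OF zA] by simp
    moreover have "gn (z,u) * f (z,u) \<le> ?I"
      using finI zA nn gn_pos
      by (intro member_le_sum[where f="\<lambda>e. gn e * f e"]) (auto simp: less_imp_le)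
    moreover have "?O = ?I" using c False unfolding cons_def by simp
    ultimately show ?thesis by simp
  qed
  then obtain e where "e \<in> A" "fst e = u" "f e \<noteq> 0"
    by (metis (mono_tags, lifting) less_irrefl mem_Collect_eq sum.neutral)
  then show ?thesis by (intro exI[of _ "snd e"]) (cases e, simp add: supp_def)
qed

lemma shape:
  assumes f: "feas s f" and ind: "indep (supp A f)" and s: "s \<in> V - {\<tau>}"
  shows "aug_path V E \<mu> \<gamma> x \<tau> s f"
proof -
  let ?F = "supp A f"
  have FA: "?F \<subseteq> A" unfolding supp_def by auto
  define nx where "nx u = (SOME u'. (u,u') \<in> ?F)" for u
  define w where "w n = (nx ^^ n) s" for n
  have w0: "w 0 = s" by (simp add: w_def)
  have wS: "w (Suc n) = nx (w n)" for n by (simp add: w_def)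
  have walk: "(\<forall>j\<le>i. w j \<noteq> \<tau>) \<longrightarrow> (w i, w (Suc i)) \<in> ?F" for i
  proof (induction i)
    case 0
    show ?case
    proof
      assume "\<forall>j\<le>0. w j \<noteq> \<tau>"
      have "\<exists>u'. (s,u') \<in> ?F" using out_edge[OF f s] by blast
      then have "(s, nx s) \<in> ?F" unfolding nx_def by (rule someI_ex)
      then show "(w 0, w (Suc 0)) \<in> ?F" using w0 wS[of 0] by simp
    qed
  next
    case (Suc i)
    show ?case
    proof
      assume a: "\<forall>j\<le>Suc i. w j \<noteq> \<tau>"
      then have e: "(w i, w (Suc i)) \<in> ?F" using Suc.IH by simp
      then have "w (Suc i) \<in> V" using FA A_sub by auto
      then have "w (Suc i) \<in> V - {\<tau>}" using a by simp
      then have "\<exists>u'. (w (Suc i),u') \<in> ?F" using out_edge[OF f] e by blast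
      then have "(w (Suc i), nx (w (Suc i))) \<in> ?F" unfolding nx_def by (rule someI_ex)
      then show "(w (Suc i), w (Suc (Suc i))) \<in> ?F" using wS by simp
    qed
  qed
  define P where "P n \<longleftrightarrow> w n = \<tau> \<or> (\<exists>i<n. w i = w n)" for n
  have exP: "\<exists>n. P n"
  proof (rule ccontr)
    assume "\<not> ?thesis" then have np: "\<And>n. \<not> P n" by blast
    have inV: "w n \<in> V" for n
    proof (cases n)
      case 0 then show ?thesis using w0 s by simp
    next
      case (Suc m)
      have "(w m, w (Suc m)) \<in> ?F" using walk[of m] np unfolding P_def by blast
      then show ?thesis using FA A_sub Suc by auto
    qed
    have "inj w"
    proof (rule linorder_injI)
      fix i j :: nat assume "i < j" then show "w i \<noteq> w j" using np[of j] unfolding P_def by metis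
    qed
    moreover have "range w \<subseteq> V" using inV by auto
    moreover have "finite V" using inst unfolding gnf_instance_def by blast
    ultimately have "finite (UNIV :: nat set)" by (rule inj_on_finite)
    then show False by simp
  qed
  define k where "k = (LEAST n. P n)"
  have Pk: "P k" unfolding k_def using exP by (rule LeastI_ex)
  have nPk: "\<not> P i" if "i < k" for i using that unfolding k_def by (rule not_less_Least)
  have "k \<noteq> 0"
  proof
    assume "k = 0" with Pk have "P 0" by simp
    then show False using w0 s unfolding P_def by auto
  qed
  then obtain n where kn: "k = Suc n" by (cases k) auto
  have wne: "w i \<noteq> \<tau>" if "i < k" for i using nPk[OF that] unfolding P_def by blast
  have inj: "inj_on w {..<k}"
  proof (rule linorder_inj_onI)
    fix i j assume "i < j" "j \<in> {..<k}" then show "w i \<noteq> w j" using nPk[of j] unfolding P_def by auto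
  qed auto
  define ed where "ed i = (w i, w (Suc i))" for i
  have edF: "ed i \<in> ?F" if "i < k" for i using walk[of i] wne that unfolding ed_def by auto
  have edA: "\<forall>i<k. (w i, w (Suc i)) \<in> A" using edF FA unfolding ed_def by auto
  define G where "G i = (\<Prod>l<i. gn (ed l))" for i
  have Gpos: "G i > 0" if "i \<le> k" for i
    unfolding G_def using that edA gn_pos unfolding ed_def by (intro prod_pos) auto
  have GS: "G (Suc i) = G i * gn (ed i)" for i by (simp add: G_def)
  have G0: "G 0 = 1" by (simp add: G_def)
  have WEF: "ed ` {..<k} \<subseteq> ?F" using edF by auto
  have eqf: "f = pm w k a" if c: "\<forall>u\<in>V-{\<tau>}. cons (pm w k a) u = (if u = s then 1 else 0)" for a
  proof -
    have "homog (\<lambda>e. f e - pm w k a e)"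
      using f c unfolding homog_def feas_iff by (simp add: cons_diff)
    moreover have "\<forall>e. e \<notin> ?F \<longrightarrow> f e - pm w k a e = 0"
    proof (intro allI impI)
      fix e assume e: "e \<notin> ?F"
      have "f e = 0"
      proof (cases "e \<in> A")
        case True then show ?thesis using e unfolding supp_def by simp
      next
        case False then show ?thesis using f unfolding feas_iff by blast
      qed
      moreover have "pm w k a e = 0" using e WEF by (intro pm_zero) (auto simp: ed_def)
      ultimately show "f e - pm w k a e = 0" by simp
    qed
    ultimately have "\<forall>e. f e - pm w k a e = 0" using ind unfolding indep_def by blast
    then show ?thesis by auto
  qed
  have suppq: "supp A (pm w k a) = ed ` {..<k}" if "\<forall>i<k. a i \<noteq> 0" for a
  proof
    show "supp A (pm w k a) \<subseteq> ed ` {..<k}"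
      using pm_zero unfolding supp_def ed_def by blast
    show "ed ` {..<k} \<subseteq> supp A (pm w k a)"
      using pm_val[OF inj] that edA unfolding supp_def ed_def by auto
  qed
  have consw: "cons (pm w k a) (w m) = a m - (if m > 0 then gn (ed (m-1)) * a (m-1) else 0)
      - (if w k = w m then gn (ed n) * a n else 0)" if "m < k" for m a
    unfolding cons_pm[OF edA] sum1[OF inj that] using sum2[of w n m "\<lambda>i. gn (ed i) * a i"] inj that
    unfolding kn ed_def by simp
  have conso: "cons (pm w k a) u = - (if w k = u then gn (ed n) * a n else 0)"
    if "u \<notin> w ` {..<k}" for u a
    unfolding cons_pm[OF edA] sum1'[OF that] using sum2'[of u w n "\<lambda>i. gn (ed i) * a i"] that
    unfolding kn ed_def by simp
  have ws: "w m = s \<longleftrightarrow> m = 0" if "m < k" for m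
    using inj that w0 \<open>k \<noteq> 0\<close> by (metis inj_on_eq_iff lessThan_iff gr0I)
  have sw: "s \<in> w ` {..<k}" using w0 \<open>k \<noteq> 0\<close> by force
  have Gm: "gn (ed (m-1)) * G (m-1) = G m" if "m > 0" for m
    using GS[of "m-1"] that by (simp add: mult.commute)
  have loopfree: "(w i, w i) \<notin> A" for i using no_loop by simp
  show ?thesis
  proof (cases "w k = \<tau>")
    case True
    have c: "\<forall>u\<in>V-{\<tau>}. cons (pm w k G) u = (if u = s then 1 else 0)"
    proof
      fix u assume u: "u \<in> V - {\<tau>}"
      show "cons (pm w k G) u = (if u = s then 1 else 0)"
      proof (cases "u \<in> w ` {..<k}")
        case True
        then obtain m where m: "m < k" "u = w m" by auto
        have "w k \<noteq> w m" using \<open>w k = \<tau>\<close> u m by auto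
        then have "cons (pm w k G) u = G m - (if m > 0 then gn (ed (m-1)) * G (m-1) else 0)"
          using consw[OF m(1)] m by simp
        also have "\<dots> = (if m = 0 then 1 else 0)" using Gm[of m] G0 by auto
        finally show ?thesis using ws[OF m(1)] m by simp
      next
        case False
        then show ?thesis using conso[OF False] \<open>w k = \<tau>\<close> u sw by auto
      qed
    qed
    have fq: "f = pm w k G" by (rule eqf[OF c])
    have "G i \<noteq> 0" if "i < k" for i using Gpos[of i] that by simp
    then have sF: "supp A f = ed ` {..<k}" using fq suppq[of G] by blast
    let ?p = "map w [0..<Suc k]"
    have injk: "inj_on w {..<Suc k}"
    proof -
      have "w k \<notin> w ` {..<k}" using wne \<open>w k = \<tau>\<close> by force
      then show ?thesis unfolding lessThan_Suc using inj by simp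
    qed
    have pe: "path_edges ?p = ed ` {..<k}"
      using path_edges_map[of 0 k w] by (simp add: ed_def atLeast0LessThan)
    have "is_path A ?p s \<tau>"
      unfolding is_path_def
    proof (intro conjI)
      show "distinct ?p" using injk by (simp add: distinct_map atLeast0LessThan del: upt_Suc)
      show "2 \<le> length ?p" using \<open>k \<noteq> 0\<close> by simp
      show "hd ?p = s" using w0 by (simp del: upt_Suc add: hd_map)
      show "last ?p = \<tau>" using \<open>w k = \<tau>\<close> by simp
      show "path_edges ?p \<subseteq> A" using pe edF FA by auto
    qed
    then have "\<exists>p. is_path A p s \<tau> \<and> supp A f = path_edges p" using sF pe by metis
    then show ?thesis unfolding aug_path_def Let_def using f by (intro conjI disjI1)
  next
    case False
    then obtain j where j: "j < k" "w j = w k" using Pk unfolding P_def by auto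
    have jn: "j \<le> n" using j kn by simp
    define Pi where "Pi = G k / G j"
    have GkPi: "G k = Pi * G j" using Gpos[of j] j unfolding Pi_def by simp
    have gnn: "gn (ed n) * G n = G k" using GS[of n] kn by (simp add: mult.commute)
    have wkm: "w k = w m \<longleftrightarrow> m = j" if "m < k" for m
      using inj j that by (metis inj_on_eq_iff lessThan_iff)
    have kj: "k \<noteq> Suc j"
    proof
      assume "k = Suc j"
      then have "ed j \<in> A" using edF FA j by auto
      then show False using loopfree j \<open>k = Suc j\<close> unfolding ed_def by simp
    qed
    show ?thesis
    proof (cases "Pi = 1")
      case Pi1: True
      define b where "b i = (if j \<le> i then G i else 0)" for i
      have "homog (pm w k b)"
        unfolding homog_def
      proof
        fix u assume u: "u \<in> V - {\<tau>}"
        show "cons (pm w k b) u = 0"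
        proof (cases "u \<in> w ` {..<k}")
          case True
          then obtain m where m: "m < k" "u = w m" by auto
          have bn: "gn (ed n) * b n = G j" using gnn GkPi Pi1 jn unfolding b_def by simp
          have "cons (pm w k b) u = b m - (if m > 0 then gn (ed (m-1)) * b (m-1) else 0)
             - (if m = j then G j else 0)"
            using consw[OF m(1), of b] m wkm[OF m(1)] bn by simp
          also have "\<dots> = 0"
          proof (cases "m < j")
            case True then show ?thesis unfolding b_def by auto
          next
            case False
            show ?thesis
            proof (cases "m = j")
              case True then show ?thesis unfolding b_def by auto
            next
              case False2: False
              then have "m > j" "m > 0" using False by auto
              then show ?thesis unfolding b_def using Gm[of m] by auto
            qed
          qed
          finally show ?thesis .
        next
          case False
          have "w k \<noteq> u" using False j by (metis image_eqI lessThan_iff)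
          then show ?thesis using conso[OF False] by simp
        qed
      qed
      moreover have "\<forall>e. e \<notin> ?F \<longrightarrow> pm w k b e = 0"
        using WEF by (auto intro!: pm_zero simp: ed_def)
      ultimately have "\<forall>e. pm w k b e = 0" using ind unfolding indep_def by blast
      moreover have "pm w k b (ed j) = G j" using pm_val[OF inj j(1)] unfolding ed_def b_def by simp
      ultimately have False using Gpos[of j] j by (metis less_irrefl less_imp_le)
      then show ?thesis ..
    next
      case False
      define a where "a i = (if i < j then G i else G i / (1 - Pi))" for i
      have d: "1 - Pi \<noteq> 0" using False by simp
      have c: "\<forall>u\<in>V-{\<tau>}. cons (pm w k a) u = (if u = s then 1 else 0)"
      proof
        fix u assume u: "u \<in> V - {\<tau>}"
        show "cons (pm w k a) u = (if u = s then 1 else 0)"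
        proof (cases "u \<in> w ` {..<k}")
          case True
          then obtain m where m: "m < k" "u = w m" by auto
          have an: "gn (ed n) * a n = G k / (1 - Pi)" using gnn jn unfolding a_def by simp
          have "cons (pm w k a) u = a m - (if m > 0 then gn (ed (m-1)) * a (m-1) else 0)
             - (if m = j then G k / (1 - Pi) else 0)"
            using consw[OF m(1), of a] m wkm[OF m(1)] an by simp
          also have "\<dots> = (if m = 0 then 1 else 0)"
          proof (cases "m < j")
            case True then show ?thesis unfolding a_def using Gm[of m] G0 by auto
          next
            case False
            show ?thesis
            proof (cases "m = j")
              case True
              have "G j / (1 - Pi) - G k / (1 - Pi) = (G j * (1 - Pi)) / (1 - Pi)"
                unfolding GkPi diff_divide_distrib[symmetric] by (simp add: algebra_simps)
              also have "\<dots> = G j" using d by simp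
              finally have "G j / (1 - Pi) - G k / (1 - Pi) = G j" .
              then show ?thesis unfolding a_def using True Gm[of m] G0 by auto
            next
              case False2: False
              then have "m > j" "m > 0" using False by auto
              then show ?thesis unfolding a_def using Gm[of m]
                by (auto simp: field_simps)
            qed
          qed
          finally show ?thesis using ws[OF m(1)] m by simp
        next
          case False
          have "w k \<noteq> u" using False j by (metis image_eqI lessThan_iff)
          moreover have "u \<noteq> s" using False sw by auto
          ultimately show ?thesis using conso[OF False] by simp
        qed
      qed
      have fq: "f = pm w k a" by (rule eqf[OF c])
      have "a i \<noteq> 0" if "i < k" for i using Gpos[of i] that d unfolding a_def by auto
      then have sF: "supp A f = ed ` {..<k}" using fq suppq[of a] by blast
      let ?C = "map w [j..<k]"
      have ce: "cycle_edges ?C = ed ` {j..<k}"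
        using cycle_edges_map[of j k w] j by (simp add: ed_def)
      have cyc: "is_cycle A ?C"
        unfolding is_cycle_def
      proof (intro conjI)
        have "inj_on w {j..<k}" using inj by (rule inj_on_subset) auto
        then show "distinct ?C" by (simp add: distinct_map)
        show "2 \<le> length ?C" using kj j by simp
        show "cycle_edges ?C \<subseteq> A" using ce edF FA by auto
      qed
      have tC: "\<tau> \<notin> set ?C"
      proof
        assume "\<tau> \<in> set ?C"
        then obtain i where "i < k" "\<tau> = w i" by auto
        then show False using wne by metis
      qed
      show ?thesis
      proof (cases "j = 0")
        case True
        have "w 0 \<in> w ` {0..<k}" using j by auto
        then have "s \<in> set ?C" using True w0 by simp
        moreover have "supp A f = cycle_edges ?C" using sF ce True by (simp add: atLeast0LessThan)
        ultimately have "\<exists>C. is_cycle A C \<and> s \<in> set C \<and> \<tau> \<notin> set C \<and> supp A f = cycle_edges C"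
          using cyc tC by blast
        then show ?thesis unfolding aug_path_def Let_def using f by (intro conjI disjI2 disjI1)
      next
        case False
        let ?p = "map w [0..<Suc j]"
        have injj: "inj_on w {..<Suc j}" using j by (intro inj_on_subset[OF inj]) auto
        have pe: "path_edges ?p = ed ` {..<j}"
          using path_edges_map[of 0 j w] by (simp add: ed_def atLeast0LessThan)
        have lp: "last ?p = w j" by simp
        have pth: "is_path A ?p s (last ?p)"
          unfolding is_path_def
        proof (intro conjI)
          show "distinct ?p" using injj by (simp add: distinct_map atLeast0LessThan del: upt_Suc)
          show "2 \<le> length ?p" using False by simp
          show "hd ?p = s" using w0 by (simp del: upt_Suc add: hd_map)
          show "last ?p = last ?p" ..
          show "path_edges ?p \<subseteq> A" using pe edF FA j by auto
        qed
        have sC: "s \<notin> set ?C"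
        proof
          assume "s \<in> set ?C"
          then obtain i where "j \<le> i" "i < k" "w i = w 0" using w0 by auto
          then have "i = 0" using inj_onD[OF inj \<open>w i = w 0\<close>] j(1) by simp
          then show False using False \<open>j \<le> i\<close> by simp
        qed
        have wjC: "w j \<in> set ?C" using j(1) by simp
        have lC: "last ?p \<in> set ?C" using wjC by simp
        have inter: "set ?p \<inter> set ?C = {last ?p}"
        proof
          show "set ?p \<inter> set ?C \<subseteq> {last ?p}"
          proof
            fix y assume "y \<in> set ?p \<inter> set ?C"
            then have y1: "y \<in> w ` {0..<Suc j}" and y2: "y \<in> w ` {j..<k}" by (simp_all del: upt_Suc)
            from y1 obtain i1 where i1: "i1 \<in> {0..<Suc j}" "y = w i1" by (rule imageE)
            from y2 obtain i2 where i2: "i2 \<in> {j..<k}" "y = w i2" by (rule imageE)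
            have "i1 \<le> j" "j \<le> i2" "i2 < k" "y = w i1" "y = w i2" using i1 i2 by auto
            then have "w i1 = w i2" by simp
            then have "i1 = i2" using inj_onD[OF inj] \<open>i1 \<le> j\<close> \<open>i2 < k\<close> j(1) by simp
            then show "y \<in> {last ?p}" using \<open>i1 \<le> j\<close> \<open>j \<le> i2\<close> \<open>y = w i1\<close> by simp
          qed
          have "w j \<in> set ?p" by (simp del: upt_Suc)
          then show "{last ?p} \<subseteq> set ?p \<inter> set ?C" unfolding lp using wjC by blast
        qed
        have "{..<k} = {..<j} \<union> {j..<k}" using j(1) by auto
        then have "ed ` {..<k} = ed ` {..<j} \<union> ed ` {j..<k}" by (metis image_Un)
        then have "supp A f = path_edges ?p \<union> cycle_edges ?C"
          unfolding sF pe ce .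
        then have "\<exists>C p. is_cycle A C \<and> s \<notin> set C \<and> \<tau> \<notin> set C \<and>
          is_path A p s (last p) \<and> last p \<in> set C \<and> set p \<inter> set C = {last p} \<and>
          supp A f = path_edges p \<union> cycle_edges C"
          using cyc sC tC pth lC inter by (intro exI[of _ ?C] exI[of _ ?p]) simp
        then show ?thesis unfolding aug_path_def Let_def using f by (intro conjI disjI2)
      qed
    qed
  qed
qed

end

theorem lemma1:
  fixes V :: "'v set" and E :: "'v edge set" and S :: "'v set" and \<tau> v :: 'v
    and \<mu> c \<gamma> x :: "'v edge \<Rightarrow> real"
  assumes "gnf_instance V E S \<tau> \<mu> c \<gamma>"
    and "\<forall>e\<in>E. 0 \<le> x e \<and> x e \<le> \<mu> e"
    and "v \<in> V - {\<tau>}"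
    and "\<exists>g. frac_aug_path V E \<mu> \<gamma> x \<tau> v g"
  shows "\<exists>f. aug_path V E \<mu> \<gamma> x \<tau> v f \<and>
           (\<forall>g. frac_aug_path V E \<mu> \<gamma> x \<tau> v g \<longrightarrow> flow_cost E \<mu> c x f \<le> flow_cost E \<mu> c x g)"
proof -
  interpret gnf V E S \<tau> \<mu> c \<gamma> x using assms(1) by unfold_locales
  obtain g where g: "feas v g" using assms(4) by blast
  let ?K = "{f. feas v f \<and> indep (supp A f)}"
  have fin: "finite ?K" by (rule finK)
  have ne: "?K \<noteq> {}" using reduce[OF g] by blast
  have "Min (cost ` ?K) \<in> cost ` ?K" using fin ne by (intro Min_in) auto
  then obtain f where fK: "f \<in> ?K" and fmin: "cost f = Min (cost ` ?K)" by auto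
  have le: "cost f \<le> cost f'" if "f' \<in> ?K" for f'
    using fin that unfolding fmin by (intro Min_le) auto
  show ?thesis
  proof (intro exI conjI allI impI)
    show "aug_path V E \<mu> \<gamma> x \<tau> v f" using fK assms(3) shape by blast
  next
    fix g assume "feas v g"
    then obtain f' where "f' \<in> ?K" "cost f' \<le> cost g" using reduce by blast
    then show "cost f \<le> cost g" using le by (meson order_trans)
  qed
qed

end
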